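(* Let $\mu\in\mathcal P_c^*(\mathbb R^2)$, $\mathbf A\in\mathrm{GL}(2)$, $\mathbf y\in\mathbb R^2$ and $\mu_{\mathbf A,\mathbf y}=(\mathbf A\cdot+\mathbf y)_\#\mu$. Then $\mathcal N_{\mathrm m}[\mu_{\mathbf A,\mathbf y}]=\mathcal N_{\mathrm m}[\mu]$.
   Context: $\mathbb S_1=\{x\in\mathbb R^2:\|x\|=1\}$; $\mathcal R_\theta[\mu]=(\langle\cdot,\theta\rangle)_\#\mu$. Fix a reference Borel probability measure $\rho$ on $\mathbb R$ without atoms. For a probability measure $\nu$ on $\mathbb R$ with $F_\nu(t)=\nu((-\infty,t])$, $F_\nu^{[-1]}(t)=\inf\{s:F_\nu(s)>t\}$ and the CDT is $\hat\nu=F_\nu^{[-1]}\circ F_\rho$; $\widehat{\mathcal R}_\theta[\mu]$ is the CDT of $\mathcal R_\theta[\mu]$. For $g\in L^2_\rho(\mathbb R)$, $\operatorname{mean}(g)=\int g\,\mathrm d\rho$, $\operatorname{std}(g)=(\int|g-\operatorname{mean}(g)|^2\mathrm d\rho)^{1/2}$. $\mathcal P_c^*(\mathbb R^2)$ is the set of compactly supported Borel probability measures on $\mathbb R^2$ whose support has affine hull of dimension $>1$. For such $\mu$: $\mathcal N_\theta[\mu](t)=\big(\widehat{\mathcal R}_\theta[\mu](t)-\operatorname{mean}(\widehat{\mathcal R}_\theta[\mu])\big)/\operatorname{std}(\widehat{\mathcal R}_\theta[\mu])$ and $\mathcal N_{\mathrm m}[\mu](t)=\sup_{\theta\in\mathbb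 S_1}\mathcal N_\theta[\mu](t)$, $t\in\mathbb R$. *)

theory Defs
  imports "HOL-Probability.Probability"
begin

definition msupp :: "'a::topological_space measure \<Rightarrow> 'a set" where
  "msupp \<mu> = {x. \<forall>U. open U \<and> x \<in> U \<longrightarrow> emeasure \<mu> U > 0}"

definition Pc_star :: "(real^2) measure \<Rightarrow> bool" where
  "Pc_star \<mu> \<longleftrightarrow> prob_space \<mu> \<and> sets \<mu> = sets borel \<and>
     compact (msupp \<mu>) \<and> aff_dim (msupp \<mu>) > 1"

definition radon :: "real^2 \<Rightarrow> (real^2) measure \<Rightarrow> real measure" where
  "radon \<theta> \<mu> = distr \<mu> borel (\<lambda>x. x \<bullet> \<theta>)"

text \<open>Generalised inverse F^[-1](t) = inf {s. F s > t}, with values in the extended reals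
  (so that inf of the empty set is +infinity).\<close>
definition pinv :: "(real \<Rightarrow> real) \<Rightarrow> real \<Rightarrow> ereal" where
  "pinv F t = Inf {ereal s | s. F s > t}"

definition CDT :: "real measure \<Rightarrow> real measure \<Rightarrow> real \<Rightarrow> ereal" where
  "CDT \<rho> \<nu> = (\<lambda>t. pinv (cdf \<nu>) (cdf \<rho> t))"

definition mean_rho :: "real measure \<Rightarrow> (real \<Rightarrow> ereal) \<Rightarrow> real" where
  "mean_rho \<rho> g = (\<integral>x. real_of_ereal (g x) \<partial>\<rho>)"

definition std_rho :: "real measure \<Rightarrow> (real \<Rightarrow> ereal) \<Rightarrow> real" where
  "std_rho \<rho> g = sqrt (\<integral>x. (real_of_ereal (g x) - mean_rho \<rho> g)\<^sup>2 \<partial>\<rho>)"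

definition N_theta :: "real measure \<Rightarrow> real^2 \<Rightarrow> (real^2) measure \<Rightarrow> real \<Rightarrow> ereal" where
  "N_theta \<rho> \<theta> \<mu> t =
     (let g = CDT \<rho> (radon \<theta> \<mu>) in (g t - ereal (mean_rho \<rho> g)) / ereal (std_rho \<rho> g))"

definition N_max :: "real measure \<Rightarrow> (real^2) measure \<Rightarrow> real \<Rightarrow> ereal" where
  "N_max \<rho> \<mu> t = (SUP \<theta> \<in> sphere (0::real^2) 1. N_theta \<rho> \<theta> \<mu> t)"

end

theory Submission
  imports Defs
begin


lemma ereal_aff_mono:
  fixes x z :: ereal assumes "r > 0" "x \<le> z"
  shows "ereal r * x + ereal c \<le> ereal r * z + ereal c"
  using assms by (cases x; cases z) auto

lemma ereal_aff_inv1: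
  fixes x :: ereal assumes "r > 0"
  shows "(ereal r * x + ereal c - ereal c) * ereal (1/r) = x"
  using assms by (cases x) auto

lemma ereal_aff_inv2:
  fixes x :: ereal assumes "r > 0"
  shows "ereal r * ((x - ereal c) * ereal (1/r)) + ereal c = x"
  using assms by (cases x) auto

lemma ereal_aff_inv_mono:
  fixes x z :: ereal assumes "r > 0" "x \<le> z"
  shows "(x - ereal c) * ereal (1/r) \<le> (z - ereal c) * ereal (1/r)"
  using assms by (cases x; cases z) (auto intro: divide_right_mono)

lemma Inf_affine_ereal:
  fixes X :: "ereal set" assumes r: "r > 0"
  shows "Inf ((\<lambda>x. ereal r * x + ereal c) ` X) = ereal r * Inf X + ereal c"
proof (rule antisym)
  define z where "z = Inf ((\<lambda>x. ereal r * x + ereal c) ` X)"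
  have "(z - ereal c) * ereal (1/r) \<le> Inf X"
  proof (rule Inf_greatest)
    fix x assume "x \<in> X"
    then have "z \<le> ereal r * x + ereal c" unfolding z_def by (auto intro: Inf_lower)
    from ereal_aff_inv_mono[OF r this, of c] show "(z - ereal c) * ereal (1/r) \<le> x"
      using ereal_aff_inv1[OF r] by simp
  qed
  from ereal_aff_mono[OF r this, of c] show "z \<le> ereal r * Inf X + ereal c"
    using ereal_aff_inv2[OF r] by simp
next
  show "ereal r * Inf X + ereal c \<le> Inf ((\<lambda>x. ereal r * x + ereal c) ` X)"
    by (rule Inf_greatest) (auto intro!: ereal_aff_mono[OF r] Inf_lower)
qed

lemma ereal_N_alg:
  fixes x :: ereal assumes "r > 0"
  shows "((ereal r * x + ereal c) - ereal (r * mm + c)) / ereal (r * sd) = (x - ereal mm) / ereal sd"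
proof (cases "sd = 0")
  case True
  then show ?thesis using assms
    by (cases x) (auto simp: divide_ereal_def algebra_simps)
next
  case False
  then show ?thesis using assms
    by (cases x) (auto simp: divide_ereal_def field_simps zero_less_mult_iff)
qed

lemma cdf_distr_aff:
  assumes nu: "sets \<nu> = sets borel" and r: "r > 0"
  shows "cdf (distr \<nu> borel (\<lambda>s. r * s + c)) x = cdf \<nu> ((x-c)/r)"
proof -
  have meas: "(\<lambda>s. r * s + c) \<in> borel_measurable \<nu>"
    unfolding measurable_cong_sets[OF nu refl] by measurable
  have sp: "space \<nu> = UNIV" using sets_eq_imp_space_eq[OF nu] by simp
  have "(\<lambda>s. r * s + c) -` {..x} \<inter> space \<nu> = {..(x-c)/r}"
    using r by (auto simp: sp field_simps)
  then show ?thesis unfolding cdf_def using meas by (simp add: measure_distr)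
qed

lemma CDT_aff:
  assumes nu: "sets \<nu> = sets borel" and r: "r > 0"
  shows "CDT \<rho> (distr \<nu> borel (\<lambda>s. r * s + c)) t = ereal r * CDT \<rho> \<nu> t + ereal c"
proof -
  define u where "u = cdf \<rho> t"
  have "{ereal s |s. cdf (distr \<nu> borel (\<lambda>s. r * s + c)) s > u}
        = (\<lambda>x. ereal r * x + ereal c) ` {ereal s |s. cdf \<nu> s > u}"
  proof (intro equalityI subsetI)
    fix x assume "x \<in> {ereal s |s. cdf (distr \<nu> borel (\<lambda>s. r * s + c)) s > u}"
    then obtain s where s: "x = ereal s" "cdf \<nu> ((s-c)/r) > u"
      using cdf_distr_aff[OF nu r] by auto
    have "x = ereal r * ereal ((s-c)/r) + ereal c" using s r by simp
    then show "x \<in> (\<lambda>x. ereal r * x + ereal c) ` {ereal s |s. cdf \<nu> s > u}"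
      using s by blast
  next
    fix x assume "x \<in> (\<lambda>x. ereal r * x + ereal c) ` {ereal s |s. cdf \<nu> s > u}"
    then obtain s where s: "x = ereal (r * s + c)" "cdf \<nu> s > u" using r by auto
    have "cdf (distr \<nu> borel (\<lambda>s. r * s + c)) (r * s + c) > u"
      using s r cdf_distr_aff[OF nu r] by simp
    then show "x \<in> {ereal s |s. cdf (distr \<nu> borel (\<lambda>s. r * s + c)) s > u}"
      using s by blast
  qed
  then show ?thesis unfolding CDT_def pinv_def u_def[symmetric]
    using Inf_affine_ereal[OF r] by simp
qed

lemma AE_cdf_less_1:
  assumes P: "prob_space \<rho>" and S: "sets \<rho> = sets borel"
    and at: "\<And>x. emeasure \<rho> {x} = 0"
  shows "AE t in \<rho>. cdf \<rho> t < 1"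
proof (cases "{t. cdf \<rho> t \<ge> 1} = {}")
  case True
  then show ?thesis by (intro AE_I2) (auto simp: not_le)
next
  case False
  interpret real_distribution \<rho> using P S by (simp add: real_distribution_def real_distribution_axioms_def)
  have sp: "space \<rho> = UNIV" using sets_eq_imp_space_eq[OF S] by simp
  define T where "T = {t. cdf \<rho> t \<ge> 1}"
  have "\<forall>\<^sub>F x in at_bot. cdf \<rho> x < 1/2"
    using cdf_lim_at_bot by (rule order_tendstoD) simp
  then obtain b where b: "\<And>x. x \<le> b \<Longrightarrow> cdf \<rho> x < 1/2"
    by (auto simp: eventually_at_bot_linorder)
  have bdd: "bdd_below T"
  proof (rule bdd_belowI)
    fix x assume "x \<in> T"
    then show "b \<le> x" using b[of x] by (force simp: T_def)
  qed
  define t0 where "t0 = Inf T"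
  have ne: "T \<noteq> {}" using False T_def by simp
  have ge: "x \<in> T \<Longrightarrow> t0 \<le> x" for x using bdd by (simp add: t0_def cInf_lower)
  have gt: "cdf \<rho> x = 1" if xt: "x > t0" for x
  proof -
    obtain s where "s \<in> T" "s < x" using cInf_less_iff[OF ne bdd] xt t0_def by auto
    then have "cdf \<rho> x \<ge> 1" using cdf_nondecreasing[of s x] T_def by auto
    moreover have "cdf \<rho> x \<le> 1" using cdf_bounded_prob[of x] by simp
    ultimately show ?thesis by simp
  qed
  have "(cdf \<rho> \<longlongrightarrow> cdf \<rho> t0) (at_right t0)"
    using cdf_is_right_cont[of t0] by (simp add: continuous_within)
  moreover have "(cdf \<rho> \<longlongrightarrow> 1) (at_right t0)"
  proof (rule tendsto_eventually)
    show "\<forall>\<^sub>F x in at_right t0. cdf \<rho> x = 1"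
      using eventually_at_right_less[of t0] by eventually_elim (rule gt)
  qed
  ultimately have c1: "cdf \<rho> t0 = 1"
    using tendsto_unique[OF trivial_limit_at_right_real] by blast
  have "measure \<rho> {t0<..} = 1 - measure \<rho> {..t0}"
    using prob_compl[of "{..t0}"] S by (simp add: sp Compl_eq_Diff_UNIV[symmetric] cdf_def)
  then have "measure \<rho> {t0<..} = 0" using c1 by (simp add: cdf_def)
  then have e1: "emeasure \<rho> {t0<..} = 0" by (simp add: emeasure_eq_measure)
  have "AE t in \<rho>. t \<notin> {t0<..}"
    by (rule AE_I'[of "{t0<..}"]) (use e1 S in auto)
  moreover have "AE t in \<rho>. t \<notin> {t0}"
    by (rule AE_I'[of "{t0}"]) (use at S in auto)
  ultimately show ?thesis
  proof eventually_elim
    case (elim t)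
    then have "t < t0" by auto
    then show ?case using ge[of t] by (force simp: T_def not_le[symmetric])
  qed
qed

definition Nf :: "real measure \<Rightarrow> real measure \<Rightarrow> real \<Rightarrow> ereal" where
  "Nf \<rho> \<nu> t = (let g = CDT \<rho> \<nu> in (g t - ereal (mean_rho \<rho> g)) / ereal (std_rho \<rho> g))"

lemma Nf_aff:
  assumes P: "prob_space \<rho>" and S: "sets \<rho> = sets borel" and at: "\<And>x. emeasure \<rho> {x} = 0"
    and nuP: "prob_space \<nu>" and nuS: "sets \<nu> = sets borel"
    and lo: "\<And>s. s < a \<Longrightarrow> cdf \<nu> s = 0"
    and hi: "\<And>s. b \<le> s \<Longrightarrow> cdf \<nu> s = 1"
    and r: "r > 0"
  shows "Nf \<rho> (distr \<nu> borel (\<lambda>s. r * s + c)) = Nf \<rho> \<nu>"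
proof -
  interpret rho: real_distribution \<rho> using P S by (simp add: real_distribution_def real_distribution_axioms_def)
  interpret nu: real_distribution \<nu> using nuP nuS by (simp add: real_distribution_def real_distribution_axioms_def)
  have ab: "a \<le> b" using lo[of b] hi[of b] by (cases "b < a") auto
  define g where "g = CDT \<rho> \<nu>"
  have g': "CDT \<rho> (distr \<nu> borel (\<lambda>s. r * s + c)) = (\<lambda>t. ereal r * g t + ereal c)"
    using CDT_aff[OF nuS r] by (auto simp: g_def)
  have glo: "ereal a \<le> g t" for t
    unfolding g_def CDT_def pinv_def
  proof (rule Inf_greatest)
    fix x assume "x \<in> {ereal s |s. cdf \<nu> s > cdf \<rho> t}"
    then obtain s where "x = ereal s" "cdf \<nu> s > cdf \<rho> t" by auto
    moreover have "cdf \<rho> t \<ge> 0" by (rule rho.cdf_nonneg)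
    ultimately show "ereal a \<le> x" using lo[of s] by (cases "s < a") auto
  qed
  have ghi: "g t \<le> ereal b" if "cdf \<rho> t < 1" for t
    unfolding g_def CDT_def pinv_def
    by (rule Inf_lower) (use that hi[of b] in auto)
  have ginf: "g t = \<infinity>" if "\<not> cdf \<rho> t < 1" for t
  proof -
    have "{ereal s |s. cdf \<nu> s > cdf \<rho> t} = {}"
      using that nu.cdf_bounded_prob by (auto simp: not_less) (meson less_le_trans not_le)
    then show ?thesis unfolding g_def CDT_def pinv_def by (simp add: top_ereal_def)
  qed
  define k where "k t = real_of_ereal (min (g t) (ereal b))" for t
  have kmin: "min (g t) (ereal b) = ereal (k t)" for t
  proof -
    have "min (g t) (ereal b) \<noteq> \<infinity>" "min (g t) (ereal b) \<noteq> -\<infinity>"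
      using glo[of t] by (auto simp: min_def)
    then show ?thesis unfolding k_def by (cases "min (g t) (ereal b)") auto
  qed
  have kab: "a \<le> k t \<and> k t \<le> b" for t
  proof -
    have "ereal a \<le> min (g t) (ereal b)" "min (g t) (ereal b) \<le> ereal b"
      using glo[of t] ab by auto
    then show ?thesis using kmin[of t] by simp
  qed
  have kabs: "norm (k t) \<le> max \<bar>a\<bar> \<bar>b\<bar>" for t using kab[of t] by auto
  have gmono: "g t1 \<le> g t2" if "t1 \<le> t2" for t1 t2
    unfolding g_def CDT_def pinv_def
    by (rule Inf_superset_mono)
       (use rho.cdf_nondecreasing[OF that] in \<open>auto intro: le_less_trans\<close>)
  have "mono k"
  proof (rule monoI)
    fix t1 t2 :: real assume "t1 \<le> t2"
    then have "min (g t1) (ereal b) \<le> min (g t2) (ereal b)" using gmono by (intro min.mono) auto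
    then show "k t1 \<le> k t2" using kmin by simp
  qed
  then have km[measurable]: "k \<in> borel_measurable borel" by (rule borel_measurable_mono)
  have cm[measurable]: "cdf \<rho> \<in> borel_measurable borel"
    by (rule borel_measurable_mono) (auto simp: mono_def rho.cdf_nondecreasing)
  have h1: "real_of_ereal (g t) = (if cdf \<rho> t < 1 then k t else 0)" for t
  proof (cases "cdf \<rho> t < 1")
    case True
    then have "min (g t) (ereal b) = g t" using ghi[of t] by simp
    then have "g t = ereal (k t)" using kmin[of t] by simp
    then show ?thesis using True by simp
  next
    case False then show ?thesis using ginf[of t] by simp
  qed
  have h2: "real_of_ereal (ereal r * g t + ereal c) = (if cdf \<rho> t < 1 then r * k t + c else 0)" for t
  proof (cases "cdf \<rho> t < 1")
    case True
    then have "min (g t) (ereal b) = g t" using ghi[of t] by simp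
    then have "g t = ereal (k t)" using kmin[of t] by simp
    then show ?thesis using True by simp
  next
    case False then show ?thesis using ginf[of t] r by simp
  qed
  have AE1: "AE t in \<rho>. cdf \<rho> t < 1" by (rule AE_cdf_less_1[OF P S at])
  have kint: "integrable \<rho> k"
    by (rule rho.integrable_const_bound[where B="max \<bar>a\<bar> \<bar>b\<bar>"]) (use kabs in auto)
  define m where "m = integral\<^sup>L \<rho> k"
  have mean1: "mean_rho \<rho> g = m"
    unfolding mean_rho_def m_def h1
    by (rule integral_cong_AE) (use AE1 in auto)
  have mean2: "mean_rho \<rho> (\<lambda>t. ereal r * g t + ereal c) = r * m + c"
  proof -
    have "mean_rho \<rho> (\<lambda>t. ereal r * g t + ereal c) = (\<integral>t. r * k t + c \<partial>\<rho>)"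
      unfolding mean_rho_def h2
      by (rule integral_cong_AE) (use AE1 in auto)
    also have "\<dots> = r * m + c"
      using kint rho.prob_space by (simp add: m_def)
    finally show ?thesis .
  qed
  define v where "v = (\<integral>t. (k t - m)\<^sup>2 \<partial>\<rho>)"
  have std1: "std_rho \<rho> g = sqrt v"
    unfolding std_rho_def mean1 v_def h1
    by (rule arg_cong[where f=sqrt], rule integral_cong_AE) (use AE1 in auto)
  have std2: "std_rho \<rho> (\<lambda>t. ereal r * g t + ereal c) = r * sqrt v"
  proof -
    have "std_rho \<rho> (\<lambda>t. ereal r * g t + ereal c) = sqrt (\<integral>t. r\<^sup>2 * (k t - m)\<^sup>2 \<partial>\<rho>)"
      unfolding std_rho_def mean2 h2
      by (rule arg_cong[where f=sqrt], rule integral_cong_AE) (use AE1 in \<open>auto simp: power2_eq_square algebra_simps\<close>)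
    also have "\<dots> = sqrt (r\<^sup>2 * v)" by (simp add: v_def)
    also have "\<dots> = r * sqrt v" using r by (simp add: real_sqrt_mult)
    finally show ?thesis .
  qed
  show ?thesis
  proof
    fix t
    show "Nf \<rho> (distr \<nu> borel (\<lambda>s. r * s + c)) t = Nf \<rho> \<nu> t"
      unfolding Nf_def Let_def g' g_def[symmetric] mean1 mean2 std1 std2
      by (rule ereal_N_alg[OF r])
  qed
qed




lemma t1: fixes A :: "real^2^2" shows "(\<lambda>x. A *v x + y) \<in> borel_measurable (borel :: (real^2) measure)"
  by (intro borel_measurable_continuous_onI continuous_on_add continuous_on_const linear_continuous_on matrix_vector_mul_bounded_linear)
lemma t2: fixes th :: "real^2" shows "(\<lambda>x. x \<bullet> th) \<in> borel_measurable (borel :: (real^2) measure)"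
  by measurable
lemma t3: fixes A :: "real^2^2" shows "(A *v x) \<bullet> th = x \<bullet> (transpose A *v th)"
  by (metis dot_lmul_matrix inner_commute transpose_transpose vector_transpose_matrix)
lemma t4: fixes A :: "real^2^2" shows "A *v (c *\<^sub>R x) = c *\<^sub>R (A *v x)"
  by (simp add: matrix_vector_mult_scaleR)
lemma null_outside_supp:
  fixes \<mu> :: "(real^2) measure"
  assumes S: "sets \<mu> = sets borel"
  shows "\<exists>N. open N \<and> emeasure \<mu> N = 0 \<and> - msupp \<mu> \<subseteq> N"
proof -
  define F where "F = {U :: (real^2) set. open U \<and> emeasure \<mu> U = 0}"
  obtain F' where F': "F' \<subseteq> F" "countable F'" "\<Union>F' = \<Union>F"
  proof (rule Lindelof[of F])
    show "\<And>S. S \<in> F \<Longrightarrow> open S" unfolding F_def by blast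
  qed blast
  have "(\<Union>U\<in>F'. U) \<in> null_sets \<mu>"
  proof (rule null_sets_UN'[OF F'(2)])
    fix U assume "U \<in> F'"
    then have "open U" "emeasure \<mu> U = 0" using F' F_def by auto
    moreover have "U \<in> sets \<mu>" using S \<open>open U\<close> by simp
    ultimately show "U \<in> null_sets \<mu>" by (intro null_setsI)
  qed
  moreover have "open (\<Union>F')" using F' unfolding F_def by (intro open_Union) blast
  moreover have "- msupp \<mu> \<subseteq> \<Union>F'"
  proof
    fix x assume "x \<in> - msupp \<mu>"
    then obtain U where "open U" "x \<in> U" "\<not> emeasure \<mu> U > 0" by (auto simp: msupp_def)
    then have "U \<in> F" by (auto simp: F_def)
    then show "x \<in> \<Union>F'" using F'(3) \<open>x \<in> U\<close> by auto
  qed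
  ultimately show ?thesis by (intro exI[of _ "\<Union>F'"]) (simp add: null_sets_def)
qed

lemma N_theta_Nf: "N_theta \<rho> \<theta> \<mu> = Nf \<rho> (radon \<theta> \<mu>)"
  by (auto simp: N_theta_def Nf_def)




lemma radon_props:
  fixes \<mu> :: "(real^2) measure"
  assumes P: "prob_space \<mu>" and S: "sets \<mu> = sets borel"
    and N: "emeasure \<mu> N = 0" "open N" and R: "\<And>x. x \<notin> N \<Longrightarrow> norm x \<le> R"
    and ph: "norm \<phi> = 1"
  shows "prob_space (radon \<phi> \<mu>)" "sets (radon \<phi> \<mu>) = sets borel"
    "\<And>s. s < -R \<Longrightarrow> cdf (radon \<phi> \<mu>) s = 0"
    "\<And>s. R \<le> s \<Longrightarrow> cdf (radon \<phi> \<mu>) s = 1"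
proof -
  interpret prob_space \<mu> by fact
  have sp: "space \<mu> = UNIV" using sets_eq_imp_space_eq[OF S] by simp
  have meas: "(\<lambda>x. x \<bullet> \<phi>) \<in> borel_measurable \<mu>"
    unfolding measurable_cong_sets[OF S refl] by (rule t2)
  show "prob_space (radon \<phi> \<mu>)" unfolding radon_def by (rule prob_space_distr[OF meas])
  show "sets (radon \<phi> \<mu>) = sets borel" unfolding radon_def by simp
  have cdfeq: "cdf (radon \<phi> \<mu>) s = measure \<mu> {x. x \<bullet> \<phi> \<le> s}" for s
  proof -
    have "(\<lambda>x. x \<bullet> \<phi>) -` {..s} \<inter> space \<mu> = {x. x \<bullet> \<phi> \<le> s}" by (auto simp: sp)
    then show ?thesis unfolding cdf_def radon_def using meas by (simp add: measure_distr)
  qed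
  have setm: "{x. x \<bullet> \<phi> \<le> s} \<in> sets \<mu>" for s
  proof -
    have "(\<lambda>x. x \<bullet> \<phi>) -` {..s} \<inter> space \<mu> \<in> sets \<mu>" by (rule measurable_sets[OF meas]) simp
    moreover have "(\<lambda>x. x \<bullet> \<phi>) -` {..s} \<inter> space \<mu> = {x. x \<bullet> \<phi> \<le> s}" by (auto simp: sp)
    ultimately show ?thesis by simp
  qed
  have Nm: "N \<in> sets \<mu>" using N S by auto
  have bnd: "\<bar>x \<bullet> \<phi>\<bar> \<le> R" if "x \<notin> N" for x
  proof -
    have "\<bar>x \<bullet> \<phi>\<bar> \<le> norm x * norm \<phi>" by (rule Cauchy_Schwarz_ineq2)
    then show ?thesis using R[OF that] ph by simp
  qed
  show "cdf (radon \<phi> \<mu>) s = 0" if "s < -R" for s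
  proof -
    have "{x. x \<bullet> \<phi> \<le> s} \<subseteq> N"
    proof
      fix x assume "x \<in> {x. x \<bullet> \<phi> \<le> s}"
      then show "x \<in> N" using bnd[of x] that by (cases "x \<in> N") auto
    qed
    then have "emeasure \<mu> {x. x \<bullet> \<phi> \<le> s} \<le> emeasure \<mu> N" by (rule emeasure_mono) (rule Nm)
    then have "emeasure \<mu> {x. x \<bullet> \<phi> \<le> s} = 0" using N by simp
    then show ?thesis using cdfeq by (simp add: measure_def)
  qed
  show "cdf (radon \<phi> \<mu>) s = 1" if "R \<le> s" for s
  proof -
    have "space \<mu> - {x. x \<bullet> \<phi> \<le> s} \<subseteq> N"
    proof
      fix x assume "x \<in> space \<mu> - {x. x \<bullet> \<phi> \<le> s}"
      then show "x \<in> N" using bnd[of x] that by (cases "x \<in> N") auto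
    qed
    then have "emeasure \<mu> (space \<mu> - {x. x \<bullet> \<phi> \<le> s}) \<le> emeasure \<mu> N" by (rule emeasure_mono) (rule Nm)
    then have "emeasure \<mu> (space \<mu> - {x. x \<bullet> \<phi> \<le> s}) = 0" using N by simp
    then have "prob (space \<mu> - {x. x \<bullet> \<phi> \<le> s}) = 0" by (simp add: measure_def)
    then show ?thesis using cdfeq prob_compl[OF setm[of s]] by simp
  qed
qed




theorem proposition8:
  fixes \<rho> :: "real measure" and \<mu> :: "(real^2) measure"
    and A :: "real^2^2" and y :: "real^2"
  assumes "prob_space \<rho>" and "sets \<rho> = sets borel" and "\<And>x. emeasure \<rho> {x} = 0"
    and "Pc_star \<mu>" and "invertible A"
  shows "N_max \<rho> (distr \<mu> borel (\<lambda>x. A *v x + y)) = N_max \<rho> \<mu>"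
proof -
  note P = assms(1) and S = assms(2) and at = assms(3)
  have muP: "prob_space \<mu>" and muS: "sets \<mu> = sets borel" and cpt: "compact (msupp \<mu>)"
    using assms(4) by (auto simp: Pc_star_def)
  obtain N where N: "open N" "emeasure \<mu> N = 0" "- msupp \<mu> \<subseteq> N"
    using null_outside_supp[OF muS] by blast
  obtain R where R0: "\<And>x. x \<in> msupp \<mu> \<Longrightarrow> norm x \<le> R"
    using compact_imp_bounded[OF cpt] by (auto simp: bounded_iff)
  have Rn: "norm x \<le> R" if "x \<notin> N" for x using R0 N(3) that by blast
  obtain B where B: "transpose A ** B = mat 1" "B ** transpose A = mat 1"
    using transpose_invertible[OF assms(5)] unfolding invertible_def by blast
  define w where "w \<theta> = transpose A *v \<theta>" for \<theta>
  define f where "f \<theta> = (1 / norm (w \<theta>)) *\<^sub>R w \<theta>" for \<theta>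
  have wnz: "w \<theta> \<noteq> 0" if "\<theta> \<noteq> 0" for \<theta>
  proof
    assume "w \<theta> = 0"
    moreover have "B *v w \<theta> = \<theta>" unfolding w_def
      by (simp only: matrix_vector_mul_assoc B(2) matrix_vector_mul_lid)
    ultimately have "\<theta> = 0" by simp
    then show False using that by simp
  qed
  have Tm: "(\<lambda>x. A *v x + y) \<in> borel_measurable \<mu>"
    unfolding measurable_cong_sets[OF muS refl] by (rule t1)
  have im: "(\<lambda>x. x \<bullet> \<theta>) \<in> borel_measurable \<mu>" for \<theta>
    unfolding measurable_cong_sets[OF muS refl] by (rule t2)
  have key: "N_theta \<rho> \<theta> (distr \<mu> borel (\<lambda>x. A *v x + y)) = N_theta \<rho> (f \<theta>) \<mu>"
    if th: "\<theta> \<in> sphere 0 1" for \<theta>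
  proof -
    define r where "r = norm (w \<theta>)"
    define c where "c = y \<bullet> \<theta>"
    have "\<theta> \<noteq> 0" using th by auto
    then have r: "r > 0" using wnz[of \<theta>] by (simp add: r_def)
    have nf: "norm (f \<theta>) = 1" using r by (simp add: f_def r_def[symmetric])
    have eq: "radon \<theta> (distr \<mu> borel (\<lambda>x. A *v x + y)) = distr (radon (f \<theta>) \<mu>) borel (\<lambda>s. r * s + c)"
    proof -
      have "radon \<theta> (distr \<mu> borel (\<lambda>x. A *v x + y)) = distr \<mu> borel ((\<lambda>x. x \<bullet> \<theta>) \<circ> (\<lambda>x. A *v x + y))"
        unfolding radon_def by (rule distr_distr[OF t2 Tm])
      also have "\<dots> = distr \<mu> borel ((\<lambda>s. r * s + c) \<circ> (\<lambda>x. x \<bullet> f \<theta>))"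
      proof (rule distr_cong)
        fix x
        have "(A *v x + y) \<bullet> \<theta> = x \<bullet> w \<theta> + c" by (simp add: inner_add_left t3 w_def c_def)
        also have "\<dots> = r * (x \<bullet> f \<theta>) + c" using r by (simp add: f_def r_def[symmetric])
        finally show "((\<lambda>x. x \<bullet> \<theta>) \<circ> (\<lambda>x. A *v x + y)) x = ((\<lambda>s. r * s + c) \<circ> (\<lambda>x. x \<bullet> f \<theta>)) x"
          by simp
      qed auto
      also have "\<dots> = distr (radon (f \<theta>) \<mu>) borel (\<lambda>s. r * s + c)"
      proof -
        have am: "(\<lambda>s. r * s + c) \<in> borel_measurable (borel::real measure)" by simp
        show ?thesis unfolding radon_def by (rule distr_distr[OF am im, symmetric])
      qed
      finally show ?thesis .
    qed
    note rp = radon_props[OF muP muS N(2) N(1) Rn nf]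
    show ?thesis
      unfolding N_theta_Nf eq
      by (rule Nf_aff[OF P S at rp(1) rp(2) rp(3) rp(4) r])
  qed
  have img: "f ` sphere 0 1 = sphere 0 1"
  proof
    show "f ` sphere 0 1 \<subseteq> sphere 0 1"
    proof
      fix z assume "z \<in> f ` sphere 0 1"
      then obtain x where x: "x \<in> sphere 0 1" "z = f x" by blast
      then have "x \<noteq> 0" by auto
      then have "w x \<noteq> 0" by (rule wnz)
      then show "z \<in> sphere 0 1" using x by (simp add: f_def)
    qed
  next
    show "sphere 0 1 \<subseteq> f ` sphere 0 1"
    proof
      fix \<phi> :: "real^2" assume ph: "\<phi> \<in> sphere 0 1"
      define v where "v = B *v \<phi>"
      have wv: "w v = \<phi>" unfolding w_def v_def by (simp only: matrix_vector_mul_assoc B(1) matrix_vector_mul_lid)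
      have w0: "w 0 = 0" unfolding w_def by simp
      have vnz: "v \<noteq> 0" using wv ph w0 by auto
      define \<theta> where "\<theta> = (1 / norm v) *\<^sub>R v"
      have th: "\<theta> \<in> sphere 0 1" using vnz by (simp add: \<theta>_def)
      have "w \<theta> = (1 / norm v) *\<^sub>R \<phi>" unfolding \<theta>_def using wv by (simp add: w_def t4)
      then have "f \<theta> = \<phi>" using ph vnz by (simp add: f_def)
      then show "\<phi> \<in> f ` sphere 0 1" using th by blast
    qed
  qed
  show ?thesis
  proof
    fix t
    have "N_max \<rho> (distr \<mu> borel (\<lambda>x. A *v x + y)) t = (SUP \<theta> \<in> sphere 0 1. N_theta \<rho> (f \<theta>) \<mu> t)"
      unfolding N_max_def using key by (intro SUP_cong) auto
    also have "\<dots> = (SUP \<phi> \<in> f ` sphere 0 1. N_theta \<rho> \<phi> \<mu> t)"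
      by (simp add: image_image)
    also have "\<dots> = N_max \<rho> \<mu> t" unfolding img N_max_def ..
    finally show "N_max \<rho> (distr \<mu> borel (\<lambda>x. A *v x + y)) t = N_max \<rho> \<mu> t" .
  qed
qed


end
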